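(* Let $k\geq 0$ and put $T_i=2^{i}(2^{i+1}+1)$. Then there exist rational numbers $\alpha_0,\dots,\alpha_k$ (depending on $k$ but not on $n$) such that for all $n\geq 0$: $$S_k(n)=\sum_{i=0}^{k/2}\alpha_{2i}T_{2i}^{\,n}\ \text{ if $k$ is even},\qquad S_k(n)=\sum_{i=1}^{(k+1)/2}\alpha_{2i-1}T_{2i-1}^{\,n}\ \text{ if $k$ is odd}.$$
   Context: The Stern polynomials $B_n(t)\in\mathbb{Z}[t]$ are defined by $B_0(t)=0$, $B_1(t)=1$, and for $n\geq 1$: $B_{2n}(t)=tB_n(t)$, $B_{2n+1}(t)=B_n(t)+B_{n+1}(t)$. For $n\geq1$ let $e(n)=\deg B_n(t)$. For $k,n\geq 0$ let $S_k(n)=\sum_{a\geq 1:\;e(a)=n}a^{k}$ (a finite sum over the positive integers $a$ with $e(a)=n$). *)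

theory Defs
  imports "HOL-Computational_Algebra.Polynomial"
begin

function stern_poly :: "nat \<Rightarrow> int poly" where
  "stern_poly n =
     (if n = 0 then 0
      else if n = 1 then 1
      else if even n then [:0, 1:] * stern_poly (n div 2)
      else stern_poly (n div 2) + stern_poly (n div 2 + 1))"
  by pat_completeness auto
termination
  by (relation "measure id") (auto elim!: oddE)

definition stern_e :: "nat \<Rightarrow> nat" where
  "stern_e n = degree (stern_poly n)"

definition stern_S :: "nat \<Rightarrow> nat \<Rightarrow> nat" where
  "stern_S k n = (\<Sum>a\<in>{a. a \<ge> 1 \<and> stern_e a = n}. a ^ k)"

definition stern_T :: "nat \<Rightarrow> nat" where
  "stern_T i = 2 ^ i * (2 ^ (i + 1) + 1)"

end

theory Submission
  imports Defs
begin

declare stern_poly.simps [simp del]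

lemma sp0: "stern_poly 0 = 0" by (subst stern_poly.simps) simp
lemma sp1: "stern_poly 1 = 1" by (subst stern_poly.simps) simp
lemma sp1' [simp]: "stern_poly (Suc 0) = 1" using sp1 by simp
lemma sp_even: "n \<ge> 1 \<Longrightarrow> stern_poly (2*n) = [:0,1:] * stern_poly n"
  by (subst stern_poly.simps) simp
lemma sp_odd: "n \<ge> 1 \<Longrightarrow> stern_poly (2*n+1) = stern_poly n + stern_poly (n+1)"
  by (subst stern_poly.simps) simp

lemma sp_pos: "n \<ge> 1 \<Longrightarrow> stern_poly n \<noteq> 0 \<and> (\<forall>i. coeff (stern_poly n) i \<ge> 0)"
proof (induction n rule: less_induct)
  case (less n)
  show ?case
  proof (cases "n = 1")
    case True then show ?thesis by (simp add: sp1)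
  next
    case False
    define m where "m = n div 2"
    have m: "m \<ge> 1" "n = 2*m \<or> n = 2*m+1" using less.prems False unfolding m_def by auto
    have m1: "m < n" "m + 1 < n \<or> n = 2*m" using m False by auto
    from m(2) show ?thesis
    proof
      assume n: "n = 2*m"
      have "stern_poly m \<noteq> 0 \<and> (\<forall>i. coeff (stern_poly m) i \<ge> 0)" using less.IH m m1 by auto
      then show ?thesis using m n by (auto simp: sp_even coeff_pCons split: nat.splits)
    next
      assume n: "n = 2*m+1"
      have a: "stern_poly m \<noteq> 0 \<and> (\<forall>i. coeff (stern_poly m) i \<ge> 0)" using less.IH m m1 by auto
      have b: "stern_poly (m+1) \<noteq> 0 \<and> (\<forall>i. coeff (stern_poly (m+1)) i \<ge> 0)" using less.IH m m1 n by auto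
      have "lead_coeff (stern_poly m) > 0" using a leading_coeff_neq_0 by (metis order_le_neq_trans)
      then have "coeff (stern_poly m + stern_poly (m+1)) (degree (stern_poly m)) > 0"
        using b by (simp add: add_pos_nonneg)
      then have "stern_poly m + stern_poly (m+1) \<noteq> 0" by (metis coeff_0 less_irrefl)
      then show ?thesis using a b unfolding n sp_odd[OF m(1)] by simp
    qed
  qed
qed

lemma deg_add_nonneg:
  fixes p q :: "int poly"
  assumes "p \<noteq> 0" "q \<noteq> 0" "\<forall>i. coeff p i \<ge> 0" "\<forall>i. coeff q i \<ge> 0"
  shows "degree (p + q) = max (degree p) (degree q)"
proof (rule antisym)
  show "degree (p + q) \<le> max (degree p) (degree q)" by (rule degree_add_le_max)
  have lp: "lead_coeff p > 0" using assms leading_coeff_neq_0 by (metis order_le_neq_trans)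
  have lq: "lead_coeff q > 0" using assms leading_coeff_neq_0 by (metis order_le_neq_trans)
  have "coeff (p+q) (max (degree p) (degree q)) > 0"
  proof (cases "degree p \<le> degree q")
    case True then show ?thesis using lq assms(3) by (simp add: max_def add_nonneg_pos)
  next
    case False then show ?thesis using lp assms(4) by (simp add: max_def add_pos_nonneg)
  qed
  then show "max (degree p) (degree q) \<le> degree (p + q)"
    by (metis le_degree less_irrefl)
qed

lemma e0: "stern_e 0 = 0" by (simp add: stern_e_def sp0)
lemma e1: "stern_e 1 = 0" by (simp add: stern_e_def sp1)
lemma e1' [simp]: "stern_e (Suc 0) = 0" by (simp add: stern_e_def)
lemma e_even: "n \<ge> 1 \<Longrightarrow> stern_e (2*n) = stern_e n + 1"
  using sp_pos[of n] by (simp add: stern_e_def sp_even degree_mult_eq)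
lemma e_odd: "n \<ge> 1 \<Longrightarrow> stern_e (2*n+1) = max (stern_e n) (stern_e (n+1))"
  using sp_pos[of n] sp_pos[of "n+1"] unfolding stern_e_def
  by (simp only: sp_odd) (rule deg_add_nonneg, auto)

lemma e_diff: "stern_e (n+1) \<le> stern_e n + 1 \<and> stern_e n \<le> stern_e (n+1) + 1"
proof (induction n rule: less_induct)
  case (less n)
  show ?case
  proof (cases "n \<le> 1")
    case True
    then have "n = 0 \<or> n = 1" by auto
    then show ?thesis using e_even[of 1] by (auto simp: e0 e1 numeral_2_eq_2)
  next
    case False
    define m where "m = n div 2"
    have m: "m \<ge> 1" "n = 2*m \<or> n = 2*m+1" using False unfolding m_def by auto
    have IH: "stern_e (m+1) \<le> stern_e m + 1 \<and> stern_e m \<le> stern_e (m+1) + 1" using less.IH m by auto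
    from m(2) show ?thesis
    proof
      assume "n = 2*m" then show ?thesis using IH m e_even[of m] e_odd[of m] by auto
    next
      assume n: "n = 2*m+1"
      have "n + 1 = 2*(m+1)" using n by simp
      then show ?thesis using IH m e_even[of "m+1"] e_odd[of m] n by auto
    qed
  qed
qed

lemma e_4p1: "b \<ge> 1 \<Longrightarrow> stern_e (4*b+1) = stern_e b + 1"
proof -
  assume b: "b \<ge> 1"
  have "stern_e (4*b+1) = max (stern_e (2*b)) (stern_e (2*b+1))"
    using e_odd[of "2*b"] b by (simp add: mult.assoc[symmetric])
  also have "\<dots> = stern_e b + 1" using e_even[OF b] e_odd[OF b] e_diff[of b] by auto
  finally show ?thesis .
qed

lemma e_4m1: "b \<ge> 1 \<Longrightarrow> stern_e (4*b-1) = stern_e b + 1"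
proof -
  assume b: "b \<ge> 1"
  then obtain c where c: "b = c + 1" by (metis add.commute le_Suc_ex plus_1_eq_Suc)
  have "4*b-1 = 2*(2*c+1)+1" using c by simp
  then have "stern_e (4*b-1) = max (stern_e (2*c+1)) (stern_e (2*(c+1)))"
    using e_odd[of "2*c+1"] by simp
  also have "\<dots> = stern_e b + 1"
  proof (cases "c = 0")
    case True then show ?thesis using c e_even[of 1] by (simp add: e1)
  next
    case False
    then have "stern_e (2*c+1) = max (stern_e c) (stern_e (c+1))" using e_odd by simp
    then show ?thesis using e_even[of "c+1"] e_diff[of c] c by auto
  qed
  finally show ?thesis .
qed

lemma ge2_decomp: "a \<ge> 2 \<Longrightarrow> \<exists>b\<ge>1. (a = 2*b \<or> a = 4*b-1 \<or> a = 4*b+1) \<and> stern_e a = stern_e b + 1"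
proof -
  assume a: "a \<ge> 2"
  have "even a \<or> a mod 4 = 1 \<or> a mod 4 = 3" by presburger
  then consider "even a" | "a mod 4 = 1" | "a mod 4 = 3" by blast
  then show ?thesis
  proof cases
    case 1
    then obtain b where "a = 2*b" by auto
    then show ?thesis using a e_even[of b] by (intro exI[of _ b]) auto
  next
    case 2
    define b where "b = a div 4"
    have "a = 4*b+1" using 2 b_def by presburger
    moreover have "b \<ge> 1" using a 2 b_def by presburger
    ultimately show ?thesis using e_4p1[of b] by (intro exI[of _ b]) auto
  next
    case 3
    define b where "b = a div 4 + 1"
    have "a = 4*b-1" using 3 b_def by presburger
    moreover have "b \<ge> 1" using b_def by simp
    ultimately show ?thesis using e_4m1[of b] by (intro exI[of _ b]) auto
  qed
qed


definition AA :: "nat \<Rightarrow> nat set" where "AA n = {a. a \<ge> 1 \<and> stern_e a = n}"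

lemma AA0: "AA 0 = {1}"
proof -
  have "a = 1" if "a \<ge> 1" "stern_e a = 0" for a
  proof (rule ccontr)
    assume "a \<noteq> 1" then have "a \<ge> 2" using that by simp
    then show False using ge2_decomp[of a] that by auto
  qed
  then show ?thesis unfolding AA_def using e1 by auto
qed

lemma AA_Suc: "AA (Suc n) = (\<lambda>b. 2*b) ` AA n \<union> (\<lambda>b. 4*b-1) ` AA n \<union> (\<lambda>b. 4*b+1) ` AA n"
proof (rule set_eqI, rule iffI)
  fix a assume "a \<in> AA (Suc n)"
  then have a: "a \<ge> 1" "stern_e a = Suc n" unfolding AA_def by auto
  then have "a \<noteq> 1" using e1 by auto
  then have "a \<ge> 2" using a by simp
  then obtain b where b: "b \<ge> 1" "a = 2*b \<or> a = 4*b-1 \<or> a = 4*b+1" "stern_e a = stern_e b + 1"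
    using ge2_decomp by blast
  then have "b \<in> AA n" using a unfolding AA_def by auto
  then show "a \<in> (\<lambda>b. 2*b) ` AA n \<union> (\<lambda>b. 4*b-1) ` AA n \<union> (\<lambda>b. 4*b+1) ` AA n"
    using b by blast
next
  fix a assume "a \<in> (\<lambda>b. 2*b) ` AA n \<union> (\<lambda>b. 4*b-1) ` AA n \<union> (\<lambda>b. 4*b+1) ` AA n"
  then obtain b where b: "b \<ge> 1" "stern_e b = n" "a = 2*b \<or> a = 4*b-1 \<or> a = 4*b+1"
    unfolding AA_def by auto
  then show "a \<in> AA (Suc n)" unfolding AA_def using e_even[of b] e_4m1[of b] e_4p1[of b] by auto
qed

lemma finite_AA: "finite (AA n)"
  by (induction n) (auto simp: AA0 AA_Suc)

lemma AA_ge1: "b \<in> AA n \<Longrightarrow> b \<ge> 1" unfolding AA_def by auto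

definition Sq :: "nat \<Rightarrow> nat \<Rightarrow> rat" where "Sq k n = of_nat (stern_S k n)"

lemma Sq_AA: "Sq k n = (\<Sum>a\<in>AA n. (of_nat a) ^ k)"
  unfolding Sq_def stern_S_def AA_def by simp

lemma Sq0: "Sq k 0 = 1" by (simp add: Sq_AA AA0)

lemma Sq_Suc1: "Sq k (Suc n) = (\<Sum>b\<in>AA n. (2 * of_nat b) ^ k + (4 * of_nat b - 1) ^ k + (4 * of_nat b + 1) ^ k)"
proof -
  let ?A = "AA n"
  have fin: "finite ?A" by (rule finite_AA)
  have d1: "(\<lambda>b. 2*b) ` ?A \<inter> (\<lambda>b. 4*b-1) ` ?A = {}"
  proof -
    have "2*b \<noteq> 4*c - 1" if "c \<ge> 1" for b c :: nat using that by presburger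
    then show ?thesis using AA_ge1 by blast
  qed
  have d2: "((\<lambda>b. 2*b) ` ?A \<union> (\<lambda>b. 4*b-1) ` ?A) \<inter> (\<lambda>b. 4*b+1) ` ?A = {}"
  proof -
    have "2*b \<noteq> 4*c + 1" for b c :: nat by presburger
    moreover have "4*b - 1 \<noteq> 4*c + 1" if "b \<ge> 1" for b c :: nat using that by presburger
    ultimately show ?thesis using AA_ge1 by blast
  qed
  have i1: "inj_on (\<lambda>b::nat. 2*b) ?A" by (auto simp: inj_on_def)
  have i2: "inj_on (\<lambda>b::nat. 4*b-1) ?A" using AA_ge1 by (auto simp: inj_on_def)
  have i3: "inj_on (\<lambda>b::nat. 4*b+1) ?A" by (auto simp: inj_on_def)
  have "Sq k (Suc n) = (\<Sum>a\<in>(\<lambda>b. 2*b) ` ?A. (of_nat a :: rat) ^ k) + (\<Sum>a\<in>(\<lambda>b. 4*b-1) ` ?A. (of_nat a :: rat) ^ k)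
      + (\<Sum>a\<in>(\<lambda>b. 4*b+1) ` ?A. (of_nat a :: rat) ^ k)"
    unfolding Sq_AA AA_Suc
    by (subst sum.union_disjoint, use fin d2 in auto, subst sum.union_disjoint, use fin d1 in auto)
  also have "\<dots> = (\<Sum>b\<in>?A. (of_nat (2*b) :: rat) ^ k) + (\<Sum>b\<in>?A. (of_nat (4*b-1) :: rat) ^ k)
      + (\<Sum>b\<in>?A. (of_nat (4*b+1) :: rat) ^ k)"
    by (simp only: sum.reindex[OF i1] sum.reindex[OF i2] sum.reindex[OF i3] comp_def)
  also have "\<dots> = (\<Sum>b\<in>?A. (2 * of_nat b) ^ k + (4 * of_nat b - 1) ^ k + (4 * of_nat b + 1) ^ k)"
  proof -
    have "(\<Sum>b\<in>?A. (of_nat (4*b-1) :: rat) ^ k) = (\<Sum>b\<in>?A. (4 * of_nat b - 1) ^ k)"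
      by (rule sum.cong) (auto dest: AA_ge1 simp: of_nat_diff)
    then show ?thesis by (simp add: sum.distrib ac_simps)
  qed
  finally show ?thesis .
qed

definition cc :: "nat \<Rightarrow> nat \<Rightarrow> rat" where
  "cc k j = (if j = k then 2^k else 0) + of_nat (k choose j) * 4^j * (1 + (-1)^(k-j))"

lemma poly_expand: "(2*x)^k + (4*x - 1)^k + (4*x+1)^k = (\<Sum>j\<le>k. cc k j * (x::rat)^j)"
proof -
  have a: "(4*x+1)^k = (\<Sum>j\<le>k. of_nat (k choose j) * 4^j * x^j)"
    by (subst binomial_ring) (simp add: power_mult_distrib mult.assoc)
  have b: "(4*x - 1)^k = (\<Sum>j\<le>k. of_nat (k choose j) * 4^j * x^j * (-1)^(k-j))"
    using binomial_ring[of "4*x" "-1" k] by (simp add: power_mult_distrib mult.assoc)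
  have c: "(2*x)^k = (\<Sum>j\<le>k. (if j = k then 2^k else 0) * x^j)"
  proof -
    have "(\<Sum>j\<le>k. (if j = k then 2^k else 0) * x^j) = (\<Sum>j\<le>k. if j = k then 2^k * x^j else 0)"
      by (rule sum.cong) auto
    then show ?thesis by (simp add: power_mult_distrib)
  qed
  show ?thesis unfolding a b c cc_def
    by (simp add: sum.distrib[symmetric] algebra_simps)
qed

lemma Sq_rec: "Sq k (Suc n) = (\<Sum>j\<le>k. cc k j * Sq j n)"
proof -
  have "Sq k (Suc n) = (\<Sum>b\<in>AA n. \<Sum>j\<le>k. cc k j * (of_nat b)^j)"
    unfolding Sq_Suc1 poly_expand ..
  also have "\<dots> = (\<Sum>j\<le>k. \<Sum>b\<in>AA n. cc k j * (of_nat b)^j)" by (rule sum.swap)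
  also have "\<dots> = (\<Sum>j\<le>k. cc k j * Sq j n)" by (simp add: Sq_AA sum_distrib_left)
  finally show ?thesis .
qed

lemma cc_diag: "cc k k = of_nat (stern_T k)"
proof -
  have "(4::rat)^k = 2^k*2^k" by (simp flip: power_mult_distrib)
  then show ?thesis by (simp add: cc_def stern_T_def power_add algebra_simps)
qed

lemma cc_zero: "j < k \<Longrightarrow> odd (k + j) \<Longrightarrow> cc k j = 0"
proof -
  assume "j < k" "odd (k+j)"
  then have "odd (k - j)" by presburger
  then show ?thesis using \<open>j < k\<close> by (simp add: cc_def)
qed

lemma T_mono: "i < k \<Longrightarrow> stern_T i < stern_T k"
  unfolding stern_T_def
  by (rule mult_strict_mono) (auto intro: power_strict_increasing)

lemma lin_rec:
  fixes u x g :: "nat \<Rightarrow> rat"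
  assumes ne: "\<forall>i\<in>I. x i \<noteq> t"
    and rec: "\<forall>n. u (Suc n) = t * u n + (\<Sum>i\<in>I. g i * x i ^ n)"
  shows "u n = (u 0 - (\<Sum>i\<in>I. g i / (x i - t))) * t^n + (\<Sum>i\<in>I. g i / (x i - t) * x i ^ n)"
proof (induction n)
  case 0 show ?case by (simp add: sum.distrib)
next
  case (Suc n)
  have trm: "g i / (x i - t) * x i ^ Suc n = t * (g i / (x i - t) * x i ^ n) + g i * x i ^ n" if "i \<in> I" for i
  proof -
    have nz: "x i - t \<noteq> 0" using ne that by simp
    define q where "q = g i / (x i - t)"
    have gq: "g i = q * (x i - t)" using nz unfolding q_def by simp
    have "q * x i ^ Suc n = t * (q * x i ^ n) + q * (x i - t) * x i ^ n" by (simp add: algebra_simps)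
    moreover have gq': "g i / (x i - t) * (x i - t) = g i" using nz by simp
    ultimately show ?thesis by (simp only: q_def gq')
  qed
  have "(\<Sum>i\<in>I. g i / (x i - t) * x i ^ Suc n) = (\<Sum>i\<in>I. t * (g i / (x i - t) * x i ^ n) + g i * x i ^ n)"
    by (rule sum.cong[OF refl], rule trm)
  also have "\<dots> = t * (\<Sum>i\<in>I. g i / (x i - t) * x i ^ n) + (\<Sum>i\<in>I. g i * x i ^ n)"
    by (simp add: sum.distrib sum_distrib_left)
  finally have eq: "(\<Sum>i\<in>I. g i / (x i - t) * x i ^ Suc n) = t * (\<Sum>i\<in>I. g i / (x i - t) * x i ^ n) + (\<Sum>i\<in>I. g i * x i ^ n)" .
  define E where "E = (\<Sum>i\<in>I. g i / (x i - t) * x i ^ n)"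
  define E' where "E' = (\<Sum>i\<in>I. g i / (x i - t) * x i ^ Suc n)"
  define D where "D = (\<Sum>i\<in>I. g i / (x i - t))"
  define G where "G = (\<Sum>i\<in>I. g i * x i ^ n)"
  have "u (Suc n) = t * u n + G" using rec unfolding G_def by blast
  also have "\<dots> = t * ((u 0 - D) * t^n + E) + G" using Suc unfolding D_def E_def by simp
  also have "\<dots> = (u 0 - D) * t^Suc n + (t * E + G)" by (simp add: algebra_simps)
  also have "t * E + G = E'" using eq unfolding E_def E'_def G_def by simp
  finally show ?case unfolding D_def E'_def .
qed


definition Pk :: "nat \<Rightarrow> (nat \<Rightarrow> rat) \<Rightarrow> bool" where
  "Pk k \<alpha> \<longleftrightarrow> (\<forall>i. \<alpha> i \<noteq> 0 \<longrightarrow> i \<le> k \<and> even (k + i)) \<and>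
     (\<forall>n. Sq k n = (\<Sum>i\<le>k. \<alpha> i * of_nat (stern_T i) ^ n))"

lemma main_ex: "\<exists>\<alpha>. Pk k \<alpha>"
proof (induction k rule: less_induct)
  case (less k)
  define Tq :: "nat \<Rightarrow> rat" where "Tq i = of_nat (stern_T i)" for i
  have "\<forall>j\<in>{..<k}. \<exists>\<alpha>. Pk j \<alpha>" using less.IH by blast
  then obtain A where A: "\<forall>j\<in>{..<k}. Pk j (A j)" by (metis bchoice)
  have supp: "A j i \<noteq> 0 \<Longrightarrow> i \<le> j \<and> even (j + i)" if "j < k" for i j
    using A that unfolding Pk_def by auto
  have ext: "Sq j n = (\<Sum>i<k. A j i * Tq i ^ n)" if "j < k" for j n
  proof -
    have "Sq j n = (\<Sum>i\<le>j. A j i * Tq i ^ n)" using A that unfolding Pk_def Tq_def by auto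
    also have "\<dots> = (\<Sum>i<k. A j i * Tq i ^ n)"
      by (rule sum.mono_neutral_left) (use that supp in \<open>auto simp: not_le\<close>)
    finally show ?thesis .
  qed
  define \<gamma> where "\<gamma> i = (\<Sum>j<k. cc k j * A j i)" for i
  have f: "(\<Sum>j<k. cc k j * Sq j n) = (\<Sum>i<k. \<gamma> i * Tq i ^ n)" for n
  proof -
    have "(\<Sum>j<k. cc k j * Sq j n) = (\<Sum>j<k. \<Sum>i<k. cc k j * A j i * Tq i ^ n)"
      by (rule sum.cong[OF refl]) (simp add: ext sum_distrib_left mult.assoc)
    also have "\<dots> = (\<Sum>i<k. \<Sum>j<k. cc k j * A j i * Tq i ^ n)" by (rule sum.swap)
    also have "\<dots> = (\<Sum>i<k. \<gamma> i * Tq i ^ n)" by (simp add: \<gamma>_def sum_distrib_right)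
    finally show ?thesis .
  qed
  have rec: "\<forall>n. Sq k (Suc n) = Tq k * Sq k n + (\<Sum>i\<in>{..<k}. \<gamma> i * Tq i ^ n)"
  proof
    fix n
    have "Sq k (Suc n) = (\<Sum>j<Suc k. cc k j * Sq j n)" by (simp add: Sq_rec lessThan_Suc_atMost)
    also have "\<dots> = Tq k * Sq k n + (\<Sum>j<k. cc k j * Sq j n)" by (simp add: cc_diag Tq_def)
    finally show "Sq k (Suc n) = Tq k * Sq k n + (\<Sum>i\<in>{..<k}. \<gamma> i * Tq i ^ n)" by (simp add: f)
  qed
  have ne: "\<forall>i\<in>{..<k}. Tq i \<noteq> Tq k" using T_mono unfolding Tq_def by fastforce
  define \<delta> where "\<delta> i = \<gamma> i / (Tq i - Tq k)" for i
  define \<beta> where "\<beta> = 1 - (\<Sum>i<k. \<delta> i)"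
  define \<alpha> where "\<alpha> i = (if i < k then \<delta> i else if i = k then \<beta> else 0)" for i
  have sol: "Sq k n = \<beta> * Tq k ^ n + (\<Sum>i<k. \<delta> i * Tq i ^ n)" for n
    using lin_rec[OF ne rec, of n] unfolding \<beta>_def \<delta>_def by (simp add: Sq0)
  have "Pk k \<alpha>"
    unfolding Pk_def
  proof (rule conjI; intro allI impI)
    fix i assume nz: "\<alpha> i \<noteq> 0"
    show "i \<le> k \<and> even (k + i)"
    proof (cases "i < k")
      case True
      then have "\<gamma> i \<noteq> 0" using nz unfolding \<alpha>_def \<delta>_def by auto
      then obtain j where j: "j < k" "cc k j * A j i \<noteq> 0" unfolding \<gamma>_def
        by (meson lessThan_iff sum.not_neutral_contains_not_neutral)
      then have "even (k + j)" using cc_zero by fastforce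
      moreover have "i \<le> j \<and> even (j + i)" using supp j by auto
      ultimately show ?thesis using j by presburger
    next
      case False then show ?thesis using nz unfolding \<alpha>_def by (auto split: if_splits)
    qed
  next
    fix n
    have "(\<Sum>i\<le>k. \<alpha> i * of_nat (stern_T i) ^ n) = (\<Sum>i<Suc k. \<alpha> i * Tq i ^ n)"
      by (simp add: lessThan_Suc_atMost Tq_def)
    also have "\<dots> = (\<Sum>i<k. \<delta> i * Tq i ^ n) + \<beta> * Tq k ^ n"
      by (simp add: \<alpha>_def)
    finally show "Sq k n = (\<Sum>i\<le>k. \<alpha> i * of_nat (stern_T i) ^ n)" using sol by simp
  qed
  then show ?case by blast
qed


theorem mainTheorem10:
  fixes k :: nat
  shows "\<exists>\<alpha> :: nat \<Rightarrow> rat. \<forall>n :: nat.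
    of_nat (stern_S k n) =
      (if even k
       then (\<Sum>i = 0..k div 2. \<alpha> (2 * i) * of_nat (stern_T (2 * i)) ^ n)
       else (\<Sum>i = 1..(k + 1) div 2. \<alpha> (2 * i - 1) * of_nat (stern_T (2 * i - 1)) ^ n))"
proof -
  obtain \<alpha> where P: "Pk k \<alpha>" using main_ex by blast
  have supp: "\<alpha> i \<noteq> 0 \<Longrightarrow> i \<le> k \<and> even (k + i)" for i using P unfolding Pk_def by auto
  have S: "of_nat (stern_S k n) = (\<Sum>i\<le>k. \<alpha> i * of_nat (stern_T i) ^ n)" for n
    using P unfolding Pk_def Sq_def by auto
  show ?thesis
  proof (intro exI[of _ \<alpha>] allI)
    fix n
    define h where "h i = \<alpha> i * (of_nat (stern_T i) :: rat) ^ n" for i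
    show "of_nat (stern_S k n) =
      (if even k
       then (\<Sum>i = 0..k div 2. \<alpha> (2 * i) * of_nat (stern_T (2 * i)) ^ n)
       else (\<Sum>i = 1..(k + 1) div 2. \<alpha> (2 * i - 1) * of_nat (stern_T (2 * i - 1)) ^ n))"
    proof (cases "even k")
      case True
      have inj: "inj_on (\<lambda>i::nat. 2*i) {0..k div 2}" by (auto simp: inj_on_def)
      have "(\<Sum>i = 0..k div 2. \<alpha> (2 * i) * of_nat (stern_T (2 * i)) ^ n) = (\<Sum>i = 0..k div 2. h (2*i))"
        unfolding h_def ..
      also have "\<dots> = sum h ((\<lambda>i. 2*i) ` {0..k div 2})" by (simp add: sum.reindex[OF inj])
      also have "\<dots> = sum h {..k}"
      proof (rule sum.mono_neutral_left)
        show "(\<lambda>i. 2*i) ` {0..k div 2} \<subseteq> {..k}" by auto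
        show "\<forall>i\<in>{..k} - (\<lambda>i. 2*i) ` {0..k div 2}. h i = 0"
        proof
          fix i assume i: "i \<in> {..k} - (\<lambda>i. 2*i) ` {0..k div 2}"
          show "h i = 0"
          proof (rule ccontr)
            assume "h i \<noteq> 0"
            then have "\<alpha> i \<noteq> 0" unfolding h_def by auto
            then have "i \<le> k" "even i" using supp True by auto
            then have "i \<in> (\<lambda>i. 2*i) ` {0..k div 2}"
              by (intro image_eqI[of _ _ "i div 2"]) auto
            then show False using i by auto
          qed
        qed
      qed auto
      finally show ?thesis using True S unfolding h_def by simp
    next
      case False
      have inj: "inj_on (\<lambda>i::nat. 2*i-1) {1..(k+1) div 2}" by (auto simp: inj_on_def)
      have "(\<Sum>i = 1..(k + 1) div 2. \<alpha> (2 * i - 1) * of_nat (stern_T (2 * i - 1)) ^ n) = (\<Sum>i = 1..(k+1) div 2. h (2*i-1))"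
        unfolding h_def ..
      also have "\<dots> = sum h ((\<lambda>i. 2*i-1) ` {1..(k+1) div 2})" by (simp only: sum.reindex[OF inj] comp_def)
      also have "\<dots> = sum h {..k}"
      proof (rule sum.mono_neutral_left)
        show "(\<lambda>i. 2*i-1) ` {1..(k+1) div 2} \<subseteq> {..k}" using False by (clarsimp; presburger)
        show "\<forall>i\<in>{..k} - (\<lambda>i. 2*i-1) ` {1..(k+1) div 2}. h i = 0"
        proof
          fix i assume i: "i \<in> {..k} - (\<lambda>i. 2*i-1) ` {1..(k+1) div 2}"
          show "h i = 0"
          proof (rule ccontr)
            assume "h i \<noteq> 0"
            then have "\<alpha> i \<noteq> 0" unfolding h_def by auto
            then have "i \<le> k" "odd i" using supp False by auto
            then have e1: "i = 2 * ((i+1) div 2) - 1" and e2': "1 \<le> (i+1) div 2 \<and> (i+1) div 2 \<le> (k+1) div 2"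
              by presburger+
            from e2' have e2: "(i+1) div 2 \<in> {1..(k+1) div 2}" by simp
            from e1 e2 have "i \<in> (\<lambda>i. 2*i-1) ` {1..(k+1) div 2}"
              by (rule image_eqI)
            then show False using i by auto
          qed
        qed
      qed auto
      finally show ?thesis using False S unfolding h_def by simp
    qed
  qed
qed

end
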